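(* For every return morphism $\sigma:\mathcal{A}^*\to\mathcal{A}^*$ and every total order $\le$ on $\mathcal{A}$, there exists a unique total order $\preceq$ on $\mathcal{A}$ such that $\sigma$ is left order preserving from $\preceq$ to $\le$; likewise there exists a unique total order $\preceq'$ on $\mathcal{A}$ such that $\sigma$ is right order preserving from $\preceq'$ to $\le$.
   Context: A return morphism for $w\in\mathcal{A}^+$ is an injective non-erasing morphism $\sigma:\mathcal{A}^*\to\mathcal{A}^*$ such that for each $a$, $\sigma(a)w$ contains exactly two occurrences of $w$, as proper prefix and proper suffix ($w$ taken of maximal length if unspecified). For $s,p\in\mathcal{A}^*$: $\mathcal{A}^L_{\sigma,s}=\{a:\sigma(a)\in\mathcal{A}^+s\}$, $\mathcal{A}^R_{\sigma,p}=\{a:\sigma(a)w\in p\mathcal{A}^+\}$; $\varphi^L_{\sigma,s}$ maps $a\in\mathcal{A}^L_{\sigma,s}$ to the letter $a'$ with $\sigma(a)\in\mathcal{A}^*a's$, $\varphi^R_{\sigma,p}$ maps $b\in\mathcal{A}^R_{\sigma,p}$ to the letter $b'$ with $\sigma(b)w\in pb'\mathcal{A}^*$. $\mathcal{T}^L(\sigma)$ is the set of longest common suffixes of $\sigma(a),\sigma(b)$ for $a\ne b$, $\mathcal{T}^R(\sigma)$ the set of longest common prefixes of $\sigma(a)w,\sigma(b)w$ for $a\ne b$. A partial map $\varphi$ is order preserving from $\preceq$ to $\le$ if $x\prec y$ implies $\varphi(x)\le\varphi(y)$ for all $x,y$ in its domain. $\sigma$ is left (resp. right) order preserving from $\preceq$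 to $\le$ if $\varphi^L_{\sigma,s}$ for every $s\in\mathcal{T}^L(\sigma)$ (resp. $\varphi^R_{\sigma,p}$ for every $p\in\mathcal{T}^R(\sigma)$) is order preserving from $\preceq$ to $\le$. *)

theory Defs
  imports Main "HOL-Library.Sublist"
begin

definition morph_ext :: "('a \<Rightarrow> 'a list) \<Rightarrow> 'a list \<Rightarrow> 'a list" where
  "morph_ext \<sigma> u = concat (map \<sigma> u)"

definition occ_at :: "'a list \<Rightarrow> 'a list \<Rightarrow> nat \<Rightarrow> bool" where
  "occ_at w u i \<longleftrightarrow> i + length w \<le> length u \<and> take (length w) (drop i u) = w"

definition return_morphism_for :: "('a \<Rightarrow> 'a list) \<Rightarrow> 'a list \<Rightarrow> bool" where
  "return_morphism_for \<sigma> w \<longleftrightarrow>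
     w \<noteq> [] \<and> inj (morph_ext \<sigma>) \<and> (\<forall>a. \<sigma> a \<noteq> []) \<and>
     (\<forall>a. {i. occ_at w (\<sigma> a @ w) i} = {0, length (\<sigma> a)})"

definition longest_common_suffix :: "'a list \<Rightarrow> 'a list \<Rightarrow> 'a list" where
  "longest_common_suffix xs ys = rev (longest_common_prefix (rev xs) (rev ys))"

definition AL :: "('a \<Rightarrow> 'a list) \<Rightarrow> 'a list \<Rightarrow> 'a set" where
  "AL \<sigma> s = {a. \<exists>u. u \<noteq> [] \<and> \<sigma> a = u @ s}"

definition AR :: "('a \<Rightarrow> 'a list) \<Rightarrow> 'a list \<Rightarrow> 'a list \<Rightarrow> 'a set" where
  "AR \<sigma> w p = {a. \<exists>u. u \<noteq> [] \<and> \<sigma> a @ w = p @ u}"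

text \<open>phiL sigma s a: the letter a' with sigma(a) in A^* a' s (meaningful on AL sigma s)\<close>
definition phiL :: "('a \<Rightarrow> 'a list) \<Rightarrow> 'a list \<Rightarrow> 'a \<Rightarrow> 'a" where
  "phiL \<sigma> s a = \<sigma> a ! (length (\<sigma> a) - length s - 1)"

text \<open>phiR sigma w p b: the letter b' with sigma(b)w in p b' A^* (meaningful on AR sigma w p)\<close>
definition phiR :: "('a \<Rightarrow> 'a list) \<Rightarrow> 'a list \<Rightarrow> 'a list \<Rightarrow> 'a \<Rightarrow> 'a" where
  "phiR \<sigma> w p b = (\<sigma> b @ w) ! length p"

definition TL :: "('a \<Rightarrow> 'a list) \<Rightarrow> 'a list set" where
  "TL \<sigma> = {longest_common_suffix (\<sigma> a) (\<sigma> b) | a b. a \<noteq> b}"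

definition TR :: "('a \<Rightarrow> 'a list) \<Rightarrow> 'a list \<Rightarrow> 'a list set" where
  "TR \<sigma> w = {longest_common_prefix (\<sigma> a @ w) (\<sigma> b @ w) | a b. a \<noteq> b}"

definition order_preserving_on :: "'a set \<Rightarrow> 'a rel \<Rightarrow> 'a rel \<Rightarrow> ('a \<Rightarrow> 'a) \<Rightarrow> bool" where
  "order_preserving_on D r le \<phi> \<longleftrightarrow>
     (\<forall>x\<in>D. \<forall>y\<in>D. (x, y) \<in> r \<and> x \<noteq> y \<longrightarrow> (\<phi> x, \<phi> y) \<in> le)"

definition left_order_preserving :: "('a \<Rightarrow> 'a list) \<Rightarrow> 'a rel \<Rightarrow> 'a rel \<Rightarrow> bool" where
  "left_order_preserving \<sigma> r le \<longleftrightarrow>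
     (\<forall>s\<in>TL \<sigma>. order_preserving_on (AL \<sigma> s) r le (phiL \<sigma> s))"

definition right_order_preserving :: "('a \<Rightarrow> 'a list) \<Rightarrow> 'a list \<Rightarrow> 'a rel \<Rightarrow> 'a rel \<Rightarrow> bool" where
  "right_order_preserving \<sigma> w r le \<longleftrightarrow>
     (\<forall>p\<in>TR \<sigma> w. order_preserving_on (AR \<sigma> w p) r le (phiR \<sigma> w p))"

end

theory Submission
  imports Defs
begin

lemma abstract_unique:
  fixes g :: "'a \<Rightarrow> 'a list" and le :: "'a rel" and T :: "'c set"
    and D :: "'c \<Rightarrow> 'a set" and \<phi> :: "'c \<Rightarrow> 'a \<Rightarrow> 'a"
  assumes lin: "linear_order_on UNIV le"
    and par: "\<And>a b. a \<noteq> b \<Longrightarrow> g a \<parallel> g b"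
    and K1: "\<And>a b. a \<noteq> b \<Longrightarrow> \<exists>s\<in>T. a \<in> D s \<and> b \<in> D s \<and> \<phi> s a \<noteq> \<phi> s b"
    and K2: "\<And>s a b. s \<in> T \<Longrightarrow> a \<in> D s \<Longrightarrow> b \<in> D s \<Longrightarrow> \<phi> s a \<noteq> \<phi> s b \<Longrightarrow>
              ((g a, g b) \<in> lexord (le - Id) \<longleftrightarrow> (\<phi> s a, \<phi> s b) \<in> le - Id)"
  shows "\<exists>!r. linear_order_on UNIV r \<and> (\<forall>s\<in>T. order_preserving_on (D s) r le (\<phi> s))"
proof -
  define R where "R = le - Id"
  have reflle: "\<And>x. (x,x) \<in> le" and transle: "trans le" and antile: "antisym le"
    and totle: "\<And>x y. x \<noteq> y \<Longrightarrow> (x,y) \<in> le \<or> (y,x) \<in> le"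
    using lin unfolding linear_order_on_def partial_order_on_def preorder_on_def refl_on_def total_on_def
    by auto
  have Rtrans: "trans R"
    unfolding R_def trans_def using transle antile
    by (metis Diff_iff IdD IdI antisymD transD)
  have Rirr: "\<forall>x. (x,x) \<notin> R" unfolding R_def by auto
  have Rtot: "\<forall>x y. (x,y) \<in> R \<or> x = y \<or> (y,x) \<in> R" unfolding R_def using totle by auto
  have asym: "\<And>x y. (x,y) \<in> lexord R \<Longrightarrow> (y,x) \<in> lexord R \<Longrightarrow> False"
    using lexord_trans lexord_irreflexive Rtrans Rirr by blast
  have ginj: "\<And>a b. g a = g b \<Longrightarrow> a = b"
    using par unfolding parallel_def by fastforce
  define r where "r = {(a,b). a = b \<or> (g a, g b) \<in> lexord R}"
  have linr: "linear_order_on UNIV r"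
    unfolding linear_order_on_def partial_order_on_def preorder_on_def refl_on_def total_on_def
      trans_def antisym_def
  proof (intro conjI allI impI ballI)
    show "r \<subseteq> UNIV \<times> UNIV" by auto
    fix x y z
    show "(x, x) \<in> r" unfolding r_def by auto
    show "(x, y) \<in> r \<Longrightarrow> (y, z) \<in> r \<Longrightarrow> (x, z) \<in> r"
      unfolding r_def using lexord_trans Rtrans by auto
    show "(x, y) \<in> r \<Longrightarrow> (y, x) \<in> r \<Longrightarrow> x = y"
      unfolding r_def using asym by auto
  next
    fix x y :: 'a assume "x \<noteq> y"
    then have "g x \<noteq> g y" using ginj by blast
    then show "(x, y) \<in> r \<or> (y, x) \<in> r"
      unfolding r_def using lexord_linear[OF Rtot] by blast
  qed
  have pres: "\<forall>s\<in>T. order_preserving_on (D s) r le (\<phi> s)"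
    unfolding order_preserving_on_def
  proof (intro ballI impI)
    fix s x y assume s: "s \<in> T" and x: "x \<in> D s" and y: "y \<in> D s"
      and xy: "(x, y) \<in> r \<and> x \<noteq> y"
    show "(\<phi> s x, \<phi> s y) \<in> le"
    proof (cases "\<phi> s x = \<phi> s y")
      case True then show ?thesis using reflle by simp
    next
      case False
      from xy have "(g x, g y) \<in> lexord R" unfolding r_def by auto
      then show ?thesis using K2[OF s x y False] unfolding R_def by auto
    qed
  qed
  show ?thesis
  proof (rule ex1I[of _ r])
    show "linear_order_on UNIV r \<and> (\<forall>s\<in>T. order_preserving_on (D s) r le (\<phi> s))"
      using linr pres by blast
  next
    fix r' assume H: "linear_order_on UNIV r' \<and> (\<forall>s\<in>T. order_preserving_on (D s) r' le (\<phi> s))"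
    have tot': "\<And>x y. x \<noteq> y \<Longrightarrow> (x,y) \<in> r' \<or> (y,x) \<in> r'"
      using H unfolding linear_order_on_def total_on_def by auto
    have refl': "\<And>x. (x,x) \<in> r'"
      using H unfolding linear_order_on_def partial_order_on_def preorder_on_def refl_on_def by auto
    have sub: "\<And>a b. (a,b) \<in> r' \<Longrightarrow> (a,b) \<in> r"
    proof -
      fix a b assume ab: "(a,b) \<in> r'"
      show "(a,b) \<in> r"
      proof (cases "a = b")
        case True then show ?thesis unfolding r_def by auto
      next
        case False
        then obtain s where s: "s \<in> T" "a \<in> D s" "b \<in> D s" "\<phi> s a \<noteq> \<phi> s b" using K1 by blast
        have "(\<phi> s a, \<phi> s b) \<in> le" using H s ab False unfolding order_preserving_on_def by blast
        then have "(\<phi> s a, \<phi> s b) \<in> le - Id" using s(4) by auto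
        then have "(g a, g b) \<in> lexord R" using K2[OF s] unfolding R_def by blast
        then show ?thesis unfolding r_def by auto
      qed
    qed
    show "r' = r"
    proof
      show "r' \<subseteq> r" using sub by auto
      show "r \<subseteq> r'"
      proof
        fix p assume p: "p \<in> r"
        obtain a b where pab: "p = (a,b)" by fastforce
        show "p \<in> r'"
        proof (cases "a = b")
          case True then show ?thesis using pab refl' by simp
        next
          case False
          show ?thesis
          proof (rule ccontr)
            assume "p \<notin> r'"
            then have "(b,a) \<in> r'" using tot'[OF False] pab by auto
            then have "(b,a) \<in> r" using sub by auto
            then show False using p pab False asym unfolding r_def by auto
          qed
        qed
      qed
    qed
  qed
qed

lemma lcp_split: "c \<noteq> d \<Longrightarrow> longest_common_prefix (p @ c # x) (p @ d # y) = p"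
  by (induction p) auto

lemma lexord_split:
  assumes "\<forall>x. (x,x) \<notin> R" "c \<noteq> d"
  shows "((p @ c # x, p @ d # y) \<in> lexord R) \<longleftrightarrow> (c, d) \<in> R"
  using assms by (simp add: lexord_same_pref_iff)

context
  fixes \<sigma> :: "'a \<Rightarrow> 'a list" and w :: "'a list"
  assumes ret: "return_morphism_for \<sigma> w"
begin

lemma sig_inj: "\<sigma> a = \<sigma> b \<Longrightarrow> a = b"
proof -
  assume "\<sigma> a = \<sigma> b"
  then have "morph_ext \<sigma> [a] = morph_ext \<sigma> [b]" unfolding morph_ext_def by simp
  then show "a = b" using ret unfolding return_morphism_for_def inj_def by blast
qed

lemma sig_ne: "\<sigma> a \<noteq> []" using ret unfolding return_morphism_for_def by blast

lemma occ: "occ_at w (\<sigma> a @ w) i \<Longrightarrow> i = 0 \<or> i = length (\<sigma> a)"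
proof -
  assume "occ_at w (\<sigma> a @ w) i"
  then have "i \<in> {i. occ_at w (\<sigma> a @ w) i}" by simp
  then show ?thesis using ret unfolding return_morphism_for_def by blast
qed

lemma pref_w: "take (length w) (\<sigma> a @ w) = w"
proof -
  have "0 \<in> {i. occ_at w (\<sigma> a @ w) i}" using ret unfolding return_morphism_for_def by blast
  then show ?thesis unfolding occ_at_def by simp
qed

lemma par_left: "a \<noteq> b \<Longrightarrow> rev (\<sigma> a) \<parallel> rev (\<sigma> b)"
proof -
  have np: "\<not> prefix (rev (\<sigma> a)) (rev (\<sigma> b))" if "a \<noteq> b" for a b
  proof
    assume "prefix (rev (\<sigma> a)) (rev (\<sigma> b))"
    then obtain t where t: "rev (\<sigma> b) = rev (\<sigma> a) @ t" by (auto simp: prefix_def)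
    then have sb: "\<sigma> b = rev t @ \<sigma> a" by (metis rev_append rev_rev_ident)
    show False
    proof (cases "t = []")
      case True then show False using sb sig_inj that by simp
    next
      case False
      have "occ_at w (\<sigma> b @ w) (length t)"
        unfolding occ_at_def sb using pref_w[of a] by simp
      then have "length t = 0 \<or> length t = length (\<sigma> b)" using occ by blast
      then show False using False sb sig_ne[of a] by simp
    qed
  qed
  assume "a \<noteq> b" then show ?thesis using np[of a b] np[of b a] by (auto simp: parallel_def)
qed

lemma par_right: "a \<noteq> b \<Longrightarrow> (\<sigma> a @ w) \<parallel> (\<sigma> b @ w)"
proof -
  have np: "\<not> prefix (\<sigma> a @ w) (\<sigma> b @ w)" if "a \<noteq> b" for a b
  proof
    assume "prefix (\<sigma> a @ w) (\<sigma> b @ w)"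
    then obtain t where t: "\<sigma> b @ w = \<sigma> a @ w @ t" by (auto simp: prefix_def)
    show False
    proof (cases "t = []")
      case True then show False using t sig_inj that by simp
    next
      case False
      have "occ_at w (\<sigma> b @ w) (length (\<sigma> a))"
        unfolding occ_at_def t by simp
      then have "length (\<sigma> a) = 0 \<or> length (\<sigma> a) = length (\<sigma> b)" using occ by blast
      moreover have "length (\<sigma> b) = length (\<sigma> a) + length t"
        using arg_cong[OF t, of length] by simp
      ultimately show False using False sig_ne[of a] by simp
    qed
  qed
  assume "a \<noteq> b" then show ?thesis using np[of a b] np[of b a] by (auto simp: parallel_def)
qed

lemma K1_left: "a \<noteq> b \<Longrightarrow> \<exists>s\<in>TL \<sigma>. a \<in> AL \<sigma> s \<and> b \<in> AL \<sigma> s \<and> phiL \<sigma> s a \<noteq> phiL \<sigma> s b"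
proof -
  assume ab: "a \<noteq> b"
  obtain p c x d y where cd: "c \<noteq> d" and ea: "rev (\<sigma> a) = p @ c # x" and eb: "rev (\<sigma> b) = p @ d # y"
    using parallel_decomp[OF par_left[OF ab]] by blast
  have sa: "\<sigma> a = rev x @ c # rev p"
  proof -
    have "\<sigma> a = rev (p @ c # x)" using ea by (metis rev_rev_ident)
    then show ?thesis by simp
  qed
  have sb: "\<sigma> b = rev y @ d # rev p"
  proof -
    have "\<sigma> b = rev (p @ d # y)" using eb by (metis rev_rev_ident)
    then show ?thesis by simp
  qed
  have "longest_common_suffix (\<sigma> a) (\<sigma> b) = rev p"
    unfolding longest_common_suffix_def ea eb using lcp_split[OF cd] by simp
  then have T: "rev p \<in> TL \<sigma>" unfolding TL_def using ab by force
  have A: "a \<in> AL \<sigma> (rev p)" unfolding AL_def using sa by force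
  have B: "b \<in> AL \<sigma> (rev p)" unfolding AL_def using sb by force
  have pa: "phiL \<sigma> (rev p) a = c" unfolding phiL_def sa by (simp add: nth_append)
  have pb: "phiL \<sigma> (rev p) b = d" unfolding phiL_def sb by (simp add: nth_append)
  show ?thesis using T A B pa pb cd by blast
qed

lemma K2_left:
  assumes irr: "\<forall>x. (x,x) \<notin> R" and a: "a \<in> AL \<sigma> s" and b: "b \<in> AL \<sigma> s"
    and ne: "phiL \<sigma> s a \<noteq> phiL \<sigma> s b"
  shows "(rev (\<sigma> a), rev (\<sigma> b)) \<in> lexord R \<longleftrightarrow> (phiL \<sigma> s a, phiL \<sigma> s b) \<in> R"
proof -
  obtain u where u: "u \<noteq> []" "\<sigma> a = u @ s" using a unfolding AL_def by blast
  obtain v where v: "v \<noteq> []" "\<sigma> b = v @ s" using b unfolding AL_def by blast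
  obtain u' c where uc: "u = u' @ [c]" using u(1) rev_exhaust by blast
  obtain v' d where vd: "v = v' @ [d]" using v(1) rev_exhaust by blast
  have pa: "phiL \<sigma> s a = c" unfolding phiL_def u(2) uc by (simp add: nth_append)
  have pb: "phiL \<sigma> s b = d" unfolding phiL_def v(2) vd by (simp add: nth_append)
  have ra: "rev (\<sigma> a) = rev s @ c # rev u'" using u(2) uc by simp
  have rb: "rev (\<sigma> b) = rev s @ d # rev v'" using v(2) vd by simp
  show ?thesis unfolding ra rb pa pb using lexord_split[OF irr] ne pa pb by simp
qed

lemma K1_right: "a \<noteq> b \<Longrightarrow> \<exists>p\<in>TR \<sigma> w. a \<in> AR \<sigma> w p \<and> b \<in> AR \<sigma> w p \<and> phiR \<sigma> w p a \<noteq> phiR \<sigma> w p b"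
proof -
  assume ab: "a \<noteq> b"
  obtain p c x d y where cd: "c \<noteq> d" and ea: "\<sigma> a @ w = p @ c # x" and eb: "\<sigma> b @ w = p @ d # y"
    using parallel_decomp[OF par_right[OF ab]] by blast
  have "longest_common_prefix (\<sigma> a @ w) (\<sigma> b @ w) = p"
    unfolding ea eb using lcp_split[OF cd] by simp
  then have T: "p \<in> TR \<sigma> w" unfolding TR_def using ab by force
  have A: "a \<in> AR \<sigma> w p" unfolding AR_def using ea by force
  have B: "b \<in> AR \<sigma> w p" unfolding AR_def using eb by force
  have pa: "phiR \<sigma> w p a = c" unfolding phiR_def ea by simp
  have pb: "phiR \<sigma> w p b = d" unfolding phiR_def eb by simp
  show ?thesis using T A B pa pb cd by blast
qed

lemma K2_right:
  assumes irr: "\<forall>x. (x,x) \<notin> R" and a: "a \<in> AR \<sigma> w p" and b: "b \<in> AR \<sigma> w p"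
    and ne: "phiR \<sigma> w p a \<noteq> phiR \<sigma> w p b"
  shows "(\<sigma> a @ w, \<sigma> b @ w) \<in> lexord R \<longleftrightarrow> (phiR \<sigma> w p a, phiR \<sigma> w p b) \<in> R"
proof -
  obtain u where u: "u \<noteq> []" "\<sigma> a @ w = p @ u" using a unfolding AR_def by blast
  obtain v where v: "v \<noteq> []" "\<sigma> b @ w = p @ v" using b unfolding AR_def by blast
  obtain c u' where uc: "u = c # u'" using u(1) list.exhaust by blast
  obtain d v' where vd: "v = d # v'" using v(1) list.exhaust by blast
  have pa: "phiR \<sigma> w p a = c" unfolding phiR_def u(2) uc by simp
  have pb: "phiR \<sigma> w p b = d" unfolding phiR_def v(2) vd by simp
  show ?thesis unfolding u(2) v(2) uc vd pa pb using lexord_split[OF irr] ne pa pb by simp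
qed

end

theorem mainTheorem18:
  fixes \<sigma> :: "'a::finite \<Rightarrow> 'a list" and w :: "'a list" and le :: "'a rel"
  assumes "return_morphism_for \<sigma> w"
    and "\<forall>w'. return_morphism_for \<sigma> w' \<longrightarrow> length w' \<le> length w"
    and "linear_order_on UNIV le"
  shows "(\<exists>!r. linear_order_on UNIV r \<and> left_order_preserving \<sigma> r le) \<and>
         (\<exists>!r. linear_order_on UNIV r \<and> right_order_preserving \<sigma> w r le)"
proof
  have irr: "\<forall>x. (x,x) \<notin> le - Id" by auto
  show "\<exists>!r. linear_order_on UNIV r \<and> left_order_preserving \<sigma> r le"
    unfolding left_order_preserving_def
  proof (rule abstract_unique[where g="\<lambda>a. rev (\<sigma> a)", OF assms(3)])
    fix a b :: 'a assume "a \<noteq> b"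
    then show "rev (\<sigma> a) \<parallel> rev (\<sigma> b)" by (rule par_left[OF assms(1)])
  next
    fix a b :: 'a assume "a \<noteq> b"
    then show "\<exists>s\<in>TL \<sigma>. a \<in> AL \<sigma> s \<and> b \<in> AL \<sigma> s \<and> phiL \<sigma> s a \<noteq> phiL \<sigma> s b"
      by (rule K1_left[OF assms(1)])
  next
    fix s a b assume "s \<in> TL \<sigma>" "a \<in> AL \<sigma> s" "b \<in> AL \<sigma> s" "phiL \<sigma> s a \<noteq> phiL \<sigma> s b"
    then show "((rev (\<sigma> a), rev (\<sigma> b)) \<in> lexord (le - Id)) = ((phiL \<sigma> s a, phiL \<sigma> s b) \<in> le - Id)"
      using K2_left[OF assms(1) irr] by blast
  qed
  show "\<exists>!r. linear_order_on UNIV r \<and> right_order_preserving \<sigma> w r le"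
    unfolding right_order_preserving_def
  proof (rule abstract_unique[where g="\<lambda>a. \<sigma> a @ w", OF assms(3)])
    fix a b :: 'a assume "a \<noteq> b"
    then show "(\<sigma> a @ w) \<parallel> (\<sigma> b @ w)" by (rule par_right[OF assms(1)])
  next
    fix a b :: 'a assume "a \<noteq> b"
    then show "\<exists>p\<in>TR \<sigma> w. a \<in> AR \<sigma> w p \<and> b \<in> AR \<sigma> w p \<and> phiR \<sigma> w p a \<noteq> phiR \<sigma> w p b"
      by (rule K1_right[OF assms(1)])
  next
    fix p a b assume "p \<in> TR \<sigma> w" "a \<in> AR \<sigma> w p" "b \<in> AR \<sigma> w p" "phiR \<sigma> w p a \<noteq> phiR \<sigma> w p b"
    then show "((\<sigma> a @ w, \<sigma> b @ w) \<in> lexord (le - Id)) = ((phiR \<sigma> w p a, phiR \<sigma> w p b) \<in> le - Id)"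
      using K2_right[OF assms(1) irr] by blast
  qed
qed

end
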